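(* For every integer $k\ge 2$ and every finite simple undirected graph $G$ on $n\ge k$ vertices, \[ \lambda_k(G)\ \le\ \frac{\lambda_{\mathbb R}(k-1)}{2(k-1)}\,n-1 . \] Consequently $c_k\le \dfrac{\lambda_{\mathbb R}(k-1)}{2(k-1)}$.
   Context: For a graph $G$ on $n$ vertices, $\lambda_1(G)\ge\cdots\ge\lambda_n(G)$ are the eigenvalues of its adjacency matrix. For $k\ge1$, $M_k(n)=\max\{\lambda_k(G): |V(G)|=n\}$ and $c_k=\sup_{n\ge k} M_k(n)/n$. For $N\ge r\ge1$, $\mathcal P_r(N)$ denotes the set of rank-$r$ orthogonal projections (symmetric idempotent matrices of rank $r$) in $\mathbb R^{N\times N}$, and \[ \lambda_{\mathbb R}(r)=\sup_{N\ge r}\frac1N\max_{Q\in\mathcal P_r(N)}\sum_{i,j=1}^N|q_{ij}|, \] where $Q=(q_{ij})$ (this equals the real maximal absolute projection constant of dimension $r$). *)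

theory Defs
  imports "Jordan_Normal_Form.DL_Rank" "Jordan_Normal_Form.Char_Poly"
begin

text \<open>Finite simple undirected graphs on the vertex set {0..<n}, given by a
  symmetric irreflexive edge relation (only its restriction to {0..<n} matters).\<close>
definition simple_graph :: "nat \<Rightarrow> (nat \<Rightarrow> nat \<Rightarrow> bool) \<Rightarrow> bool" where
  "simple_graph n E \<longleftrightarrow> (\<forall>i<n. \<forall>j<n. E i j = E j i) \<and> (\<forall>i<n. \<not> E i i)"

definition adj_mat :: "nat \<Rightarrow> (nat \<Rightarrow> nat \<Rightarrow> bool) \<Rightarrow> real mat" where
  "adj_mat n E = mat n n (\<lambda>(i, j). if E i j then 1 else 0)"

text \<open>Eigenvalues (with multiplicity) of a square real matrix whose characteristic
  polynomial splits over the reals (e.g. a symmetric one), listed in non-increasing order.\<close>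
definition eigs_desc :: "real mat \<Rightarrow> real list" where
  "eigs_desc A = (THE ls. length ls = dim_row A \<and> sorted (rev ls) \<and>
      char_poly A = (\<Prod>a\<leftarrow>ls. [:- a, 1:]))"

text \<open>lambda_k(G), 1-indexed: the k-th largest adjacency eigenvalue.\<close>
definition graph_eig :: "nat \<Rightarrow> nat \<Rightarrow> (nat \<Rightarrow> nat \<Rightarrow> bool) \<Rightarrow> real" where
  "graph_eig k n E = eigs_desc (adj_mat n E) ! (k - 1)"

definition M_k :: "nat \<Rightarrow> nat \<Rightarrow> real" where
  "M_k k n = Max {graph_eig k n E | E. simple_graph n E}"

definition c_k :: "nat \<Rightarrow> real" where
  "c_k k = (SUP n\<in>{k..}. M_k k n / real n)"

definition proj_set :: "nat \<Rightarrow> nat \<Rightarrow> real mat set" where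
  "proj_set r N = {Q \<in> carrier_mat N N. transpose_mat Q = Q \<and> Q * Q = Q \<and>
      vec_space.rank N Q = r}"

text \<open>lambda_R(r); the inner maximum is written as a supremum (it is attained,
  the set of rank-r projections being compact).\<close>
definition lambda_R :: "nat \<Rightarrow> real" where
  "lambda_R r = (SUP N\<in>{r..}. (1 / real N) *
      (SUP Q\<in>proj_set r N. (\<Sum>i<N. \<Sum>j<N. \<bar>Q $$ (i, j)\<bar>)))"

end

theory Submission
  imports Defs "Jordan_Normal_Form.Schur_Decomposition"
begin

definition mtr :: "real mat \<Rightarrow> real" where
  "mtr M = (\<Sum>i<dim_row M. M $$ (i,i))"

lemma mtr_comm:
  assumes A: "A \<in> carrier_mat n m" and B: "B \<in> carrier_mat m n"
  shows "mtr (A * B) = mtr (B * A)"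
proof -
  have "mtr (A * B) = (\<Sum>i<n. \<Sum>j<m. A $$ (i,j) * B $$ (j,i))"
    using A B by (simp add: mtr_def scalar_prod_def atLeast0LessThan)
  also have "\<dots> = (\<Sum>j<m. \<Sum>i<n. B $$ (j,i) * A $$ (i,j))"
    by (subst sum.swap) (simp add: mult.commute)
  also have "\<dots> = mtr (B * A)"
    using A B by (simp add: mtr_def scalar_prod_def atLeast0LessThan)
  finally show ?thesis .
qed

lemma mtr_roots:
  assumes A: "A \<in> carrier_mat n n"
    and c: "char_poly A = (\<Prod>(e::real)\<leftarrow>es. [:- e, 1:])"
  shows "mtr A = sum_list es"
proof -
  obtain B P Q where s: "schur_decomposition A es = (B,P,Q)"
    by (cases "schur_decomposition A es") auto
  from schur_decomposition[OF A c s]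
  have w: "similar_mat_wit A B P Q" and d: "diag_mat B = es" by auto
  from similar_mat_witD2[OF A w] have B: "B \<in> carrier_mat n n" and P: "P \<in> carrier_mat n n"
    and Q: "Q \<in> carrier_mat n n" and QP: "Q * P = 1\<^sub>m n" and AB: "A = P * B * Q" by auto
  have "mtr A = mtr (P * (B * Q))" using AB P B Q by (simp add: assoc_mult_mat)
  also have "\<dots> = mtr ((B * Q) * P)" by (rule mtr_comm[OF P], use B Q in auto)
  also have "(B * Q) * P = B" using B Q P QP by (simp add: assoc_mult_mat)
  finally have "mtr A = mtr B" .
  also have "mtr B = sum_list (diag_mat B)"
    unfolding mtr_def diag_mat_def sum_list_map_eq_sum_count by (simp add: sum_list_sum_nth atLeast0LessThan)
  finally show ?thesis using d by simp
qed

definition symm :: "nat \<Rightarrow> real mat \<Rightarrow> bool" where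
  "symm n A \<longleftrightarrow> A \<in> carrier_mat n n \<and> (\<forall>i<n. \<forall>j<n. A $$ (i,j) = A $$ (j,i))"

lemma sym_eigenvalue_real:
  fixes A :: "real mat"
  assumes S: "symm n A" and ev: "eigenvalue (of_real_hom.mat_hom A) (a::complex)"
  shows "Im a = 0"
proof -
  have A: "A \<in> carrier_mat n n" and sy: "\<And>i j. i<n \<Longrightarrow> j<n \<Longrightarrow> A $$ (i,j) = A $$ (j,i)"
    using S unfolding symm_def by auto
  let ?C = "of_real_hom.mat_hom A :: complex mat"
  from ev obtain v where v: "eigenvector ?C v a" unfolding eigenvalue_def by auto
  hence vc: "v \<in> carrier_vec n" and v0: "v \<noteq> 0\<^sub>v n" and ee: "?C *\<^sub>v v = a \<cdot>\<^sub>v v"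
    unfolding eigenvector_def using A by auto
  have eq: "\<And>i. i < n \<Longrightarrow> (\<Sum>j<n. of_real (A $$ (i,j)) * v $ j) = a * v $ i"
  proof -
    fix i assume i: "i < n"
    have "(?C *\<^sub>v v) $ i = a * v $ i" using ee i vc by simp
    moreover have "(?C *\<^sub>v v) $ i = (\<Sum>j<n. of_real (A $$ (i,j)) * v $ j)"
      using i A vc by (simp add: scalar_prod_def atLeast0LessThan)
    ultimately show "(\<Sum>j<n. of_real (A $$ (i,j)) * v $ j) = a * v $ i" by simp
  qed
  define S where "S = (\<Sum>i<n. cnj (v $ i) * (\<Sum>j<n. of_real (A $$ (i,j)) * v $ j))"
  define r where "r = (\<Sum>i<n. cnj (v $ i) * v $ i)"
  have Sa: "S = a * r"
  proof -
    have "S = (\<Sum>i<n. cnj (v $ i) * (a * v $ i))" unfolding S_def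
      by (intro sum.cong refl) (simp add: eq)
    also have "\<dots> = a * r" unfolding r_def sum_distrib_left
      by (intro sum.cong refl) (simp add: mult.commute mult.left_commute)
    finally show ?thesis .
  qed
  have "cnj S = (\<Sum>i<n. \<Sum>j<n. v $ i * (of_real (A $$ (i,j)) * cnj (v $ j)))"
    unfolding S_def by (simp add: sum_distrib_left)
  also have "\<dots> = (\<Sum>j<n. \<Sum>i<n. v $ i * (of_real (A $$ (i,j)) * cnj (v $ j)))"
    by (rule sum.swap)
  also have "\<dots> = S" unfolding S_def sum_distrib_left
    by (intro sum.cong refl, simp add: sy mult.commute mult.left_commute)
  finally have cS: "cnj S = S" .
  have rr: "r = of_real (\<Sum>i<n. (cmod (v $ i))^2)"
    unfolding r_def of_real_sum
    by (intro sum.cong refl) (metis complex_norm_square mult.commute of_real_power)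
  obtain i where i: "i < n" "v $ i \<noteq> 0" using v0 vc by (metis carrier_vecD eq_vecI index_zero_vec)
  have "(\<Sum>i<n. (cmod (v $ i))^2) > 0"
  proof -
    have "(cmod (v $ i))^2 \<le> (\<Sum>i<n. (cmod (v $ i))^2)"
      by (rule member_le_sum) (use i in auto)
    moreover have "(cmod (v $ i))^2 > 0" using i by simp
    ultimately show ?thesis by linarith
  qed
  hence r0: "r \<noteq> 0" unfolding rr by (metis less_irrefl of_real_eq_0_iff)
  have "cnj a * cnj r = a * r" using cS Sa by simp
  moreover have "cnj r = r" unfolding rr by (rule complex_cnj_complex_of_real)
  ultimately have "cnj a = a" using r0 by simp
  thus ?thesis by (metis Reals_cnj_iff complex_is_Real_iff)
qed

lemma sym_split:
  assumes S: "symm n A"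
  shows "\<exists>es. char_poly A = (\<Prod>(e::real)\<leftarrow>es. [:- e, 1:])"
proof -
  have A: "A \<in> carrier_mat n n" using S unfolding symm_def by auto
  let ?C = "of_real_hom.mat_hom A :: complex mat"
  have C: "?C \<in> carrier_mat n n" using A by auto
  from char_poly_factorized[OF C] obtain as where as: "char_poly ?C = (\<Prod>a\<leftarrow>as. [:- a, 1:])" by auto
  have re: "\<And>a. a \<in> set as \<Longrightarrow> a = of_real (Re a)"
  proof -
    fix a assume "a \<in> set as"
    hence "poly (char_poly ?C) a = 0" unfolding as by (auto simp: poly_prod_list_zero_iff)
    hence "eigenvalue ?C a" using eigenvalue_root_char_poly[OF C] by simp
    from sym_eigenvalue_real[OF S this] show "a = of_real (Re a)" by (simp add: complex_eq_iff)
  qed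
  interpret rp: map_poly_inj_idom_hom "of_real :: real \<Rightarrow> complex" by unfold_locales
  have "map_poly of_real (char_poly A) = char_poly ?C" by (rule of_real_hom.char_poly_hom[OF A, symmetric])
  also have "\<dots> = (\<Prod>a\<leftarrow>map Re as. [:- of_real a, 1:])"
  proof -
    have "map (\<lambda>a. complex_of_real (Re a)) as = as" by (rule map_idI) (use re in auto)
    hence "(\<Prod>a\<leftarrow>as. [:- a, 1:]) = (\<Prod>a\<leftarrow>map (\<lambda>a. complex_of_real (Re a)) as. [:- a, 1:])" by simp
    thus ?thesis unfolding as by (simp add: o_def)
  qed
  also have "\<dots> = map_poly of_real (\<Prod>a\<leftarrow>map Re as. [:- a, 1:])"
    by (simp add: rp.hom_prod_list o_def)
  finally have "char_poly A = (\<Prod>a\<leftarrow>map Re as. [:- a, 1:])" by (rule rp.injectivity)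
  thus ?thesis by blast
qed

lemma symm_carrier: "symm n A \<Longrightarrow> A \<in> carrier_mat n n" unfolding symm_def by auto

lemma mult_vec_sum: 
  assumes "A \<in> carrier_mat n n" "y \<in> carrier_vec n" "r < n"
  shows "(A *\<^sub>v y) $ r = (\<Sum>c<n. A $$ (r,c) * y $ c)"
  using assms by (simp add: scalar_prod_def atLeast0LessThan)

lemma sprod_sum: "y \<in> carrier_vec n \<Longrightarrow> x \<bullet> y = (\<Sum>c<n. x $ c * y $ c)"
  by (simp add: scalar_prod_def atLeast0LessThan)

lemma symm_sprod:
  assumes S: "symm n A" and x: "x \<in> carrier_vec n" and y: "y \<in> carrier_vec n"
  shows "(A *\<^sub>v x) \<bullet> y = x \<bullet> (A *\<^sub>v y)"
proof -
  have A: "A \<in> carrier_mat n n" using S by (rule symm_carrier)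
  have "(A *\<^sub>v x) \<bullet> y = (\<Sum>r<n. (\<Sum>c<n. A $$ (r,c) * x $ c) * y $ r)"
    unfolding sprod_sum[OF y] by (intro sum.cong refl) (simp add: mult_vec_sum[OF A x])
  also have "\<dots> = (\<Sum>r<n. \<Sum>c<n. A $$ (r,c) * x $ c * y $ r)" by (simp add: sum_distrib_right)
  also have "\<dots> = (\<Sum>c<n. \<Sum>r<n. A $$ (r,c) * x $ c * y $ r)" by (rule sum.swap)
  also have "\<dots> = (\<Sum>c<n. x $ c * (\<Sum>r<n. A $$ (c,r) * y $ r))"
    using S unfolding symm_def by (simp add: sum_distrib_left mult.commute mult.left_commute)
  also have "\<dots> = x \<bullet> (A *\<^sub>v y)"
  proof -
    have Ay: "A *\<^sub>v y \<in> carrier_vec n" using A y by simp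
    show ?thesis unfolding sprod_sum[OF Ay] by (intro sum.cong refl) (simp add: mult_vec_sum[OF A y])
  qed
  finally show ?thesis .
qed

definition orthon :: "nat \<Rightarrow> real vec list \<Rightarrow> bool" where
  "orthon n vs \<longleftrightarrow> set vs \<subseteq> carrier_vec n \<and>
     (\<forall>i<length vs. \<forall>j<length vs. vs ! i \<bullet> vs ! j = (if i = j then 1 else 0))"

definition eig_list :: "real mat \<Rightarrow> real vec list \<Rightarrow> real list \<Rightarrow> bool" where
  "eig_list A vs ds \<longleftrightarrow> length ds = length vs \<and> (\<forall>i<length vs. A *\<^sub>v (vs ! i) = ds ! i \<cdot>\<^sub>v (vs ! i))"

lemma deflate:
  assumes S: "symm n A" and O: "orthon n vs" and E: "eig_list A vs ds" and mn: "length vs < n"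
  shows "\<exists>v d. v \<in> carrier_vec n \<and> v \<bullet> v = 1 \<and> (\<forall>i<length vs. vs ! i \<bullet> v = 0) \<and> A *\<^sub>v v = d \<cdot>\<^sub>v v"
proof -
  define m where "m = length vs"
  have A: "A \<in> carrier_mat n n" using S by (rule symm_carrier)
  have vc: "\<And>i. i < m \<Longrightarrow> vs ! i \<in> carrier_vec n" using O unfolding orthon_def m_def by auto
  have on: "\<And>i j. i < m \<Longrightarrow> j < m \<Longrightarrow> vs ! i \<bullet> vs ! j = (if i = j then 1 else 0)"
    using O unfolding orthon_def m_def by auto
  have ev: "\<And>i. i < m \<Longrightarrow> A *\<^sub>v (vs ! i) = ds ! i \<cdot>\<^sub>v (vs ! i)" and ld: "length ds = m"
    using E unfolding eig_list_def m_def by auto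
  define t where "t = (mtr A - (\<Sum>i<m. ds ! i)) / (real n - real m) + 1"
  define K where "K = mat n n (\<lambda>(r,c). \<Sum>i<m. (t - ds ! i) * (vs ! i $ r * vs ! i $ c))"
  define B where "B = A + K"
  have K: "K \<in> carrier_mat n n" unfolding K_def by simp
  have Bc: "B \<in> carrier_mat n n" unfolding B_def using A K by simp
  have BS: "symm n B" unfolding symm_def B_def K_def using A S
    by (auto simp: symm_def mult.commute)
  have Bv: "(B *\<^sub>v y) $ r = (A *\<^sub>v y) $ r + (\<Sum>i<m. (t - ds ! i) * (vs ! i $ r) * (vs ! i \<bullet> y))"
    if y: "y \<in> carrier_vec n" and r: "r < n" for y r
  proof -
    have "(B *\<^sub>v y) $ r = (\<Sum>c<n. (A $$ (r,c) + (\<Sum>i<m. (t - ds ! i) * (vs ! i $ r * vs ! i $ c))) * y $ c)"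
      using mult_vec_sum[OF Bc y r] A r unfolding B_def K_def by simp
    also have "\<dots> = (\<Sum>c<n. A $$ (r,c) * y $ c + (\<Sum>i<m. (t - ds ! i) * (vs ! i $ r) * (vs ! i $ c * y $ c)))"
      by (intro sum.cong refl) (simp add: distrib_left distrib_right sum_distrib_left sum_distrib_right mult.commute mult.left_commute)
    also have "\<dots> = (\<Sum>c<n. A $$ (r,c) * y $ c) + (\<Sum>c<n. \<Sum>i<m. (t - ds ! i) * (vs ! i $ r) * (vs ! i $ c * y $ c))"
      by (simp add: sum.distrib)
    also have "(\<Sum>c<n. \<Sum>i<m. (t - ds ! i) * (vs ! i $ r) * (vs ! i $ c * y $ c)) = 
       (\<Sum>i<m. (t - ds ! i) * (vs ! i $ r) * (vs ! i \<bullet> y))"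
      by (subst sum.swap) (simp add: sum_distrib_left sprod_sum[OF y])
    finally show ?thesis using mult_vec_sum[OF A y r] by simp
  qed
  have Bvj: "B *\<^sub>v (vs ! j) = t \<cdot>\<^sub>v (vs ! j)" if j: "j < m" for j
  proof (rule eq_vecI)
    show "dim_vec (B *\<^sub>v vs ! j) = dim_vec (t \<cdot>\<^sub>v vs ! j)" using Bc vc[OF j] by simp
    fix r assume "r < dim_vec (t \<cdot>\<^sub>v vs ! j)"
    hence r: "r < n" using vc[OF j] by simp
    have "(\<Sum>i<m. (t - ds ! i) * (vs ! i $ r) * (vs ! i \<bullet> vs ! j)) = 
          (\<Sum>i<m. if i = j then (t - ds ! j) * (vs ! j $ r) else 0)"
      by (intro sum.cong refl) (simp add: on j)
    also have "\<dots> = (t - ds ! j) * (vs ! j $ r)" using j by simp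
    finally have "(B *\<^sub>v vs ! j) $ r = ds ! j * vs ! j $ r + (t - ds ! j) * (vs ! j $ r)"
      using Bv[OF vc[OF j] r] ev[OF j] r vc[OF j] by simp
    thus "(B *\<^sub>v vs ! j) $ r = (t \<cdot>\<^sub>v vs ! j) $ r" using r vc[OF j] by (simp add: algebra_simps)
  qed
  have trB: "mtr B = mtr A + (\<Sum>i<m. (t - ds ! i))"
  proof -
    have "mtr B = (\<Sum>r<n. A $$ (r,r) + (\<Sum>i<m. (t - ds ! i) * (vs ! i $ r * vs ! i $ r)))"
      unfolding mtr_def B_def K_def using A by simp
    also have "\<dots> = mtr A + (\<Sum>i<m. (t - ds ! i) * (vs ! i \<bullet> vs ! i))"
      unfolding mtr_def using A
      by (simp add: sum.distrib sprod_sum[OF vc] sum_distrib_left, subst sum.swap, simp add: vc sprod_sum)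
    also have "\<dots> = mtr A + (\<Sum>i<m. (t - ds ! i))" by (simp add: on)
    finally show ?thesis .
  qed
  obtain es where es: "char_poly B = (\<Prod>e\<leftarrow>es. [:- e, 1:])" using sym_split[OF BS] by auto
  have les: "length es = n" using degree_monic_char_poly[OF Bc] es degree_linear_factors[of uminus es] by simp
  have "sum_list es = mtr B" using mtr_roots[OF Bc es] by simp
  also have "\<dots> \<noteq> real n * t"
  proof
    assume "mtr B = real n * t"
    hence "mtr A + real m * t - (\<Sum>i<m. ds ! i) = real n * t" using trB by (simp add: sum_subtractf)
    hence "(real n - real m) * t = mtr A - (\<Sum>i<m. ds ! i)" by (simp add: algebra_simps)
    moreover have pos: "real n - real m > 0" using mn m_def by simp
    moreover have "(real n - real m) * t = mtr A - (\<Sum>i<m. ds ! i) + (real n - real m)"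
      unfolding t_def using pos by (simp add: field_simps)
    ultimately show False by linarith
  qed
  finally have "\<exists>e\<in>set es. e \<noteq> t"
    using les by (metis sum_list_replicate replicate_length_same mult_of_nat_commute)
  then obtain e where e: "e \<in> set es" "e \<noteq> t" by auto
  have "eigenvalue B e" unfolding eigenvalue_root_char_poly[OF Bc] es
    using e by (auto simp: poly_prod_list_zero_iff)
  then obtain x where x: "eigenvector B x e" unfolding eigenvalue_def by auto
  hence xc: "x \<in> carrier_vec n" and x0: "x \<noteq> 0\<^sub>v n" and Bx: "B *\<^sub>v x = e \<cdot>\<^sub>v x"
    unfolding eigenvector_def using Bc by auto
  have xo: "vs ! j \<bullet> x = 0" if j: "j < m" for j
  proof -
    have "t * (vs ! j \<bullet> x) = (B *\<^sub>v vs ! j) \<bullet> x" using Bvj[OF j] vc[OF j] xc by simp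
    also have "\<dots> = vs ! j \<bullet> (B *\<^sub>v x)" by (rule symm_sprod[OF BS vc[OF j] xc])
    also have "\<dots> = e * (vs ! j \<bullet> x)" using Bx vc[OF j] xc by simp
    finally show ?thesis using e(2) by simp
  qed
  have Ax: "A *\<^sub>v x = e \<cdot>\<^sub>v x"
  proof (rule eq_vecI)
    show "dim_vec (A *\<^sub>v x) = dim_vec (e \<cdot>\<^sub>v x)" using A xc by simp
    fix r assume "r < dim_vec (e \<cdot>\<^sub>v x)"
    hence r: "r < n" using xc by simp
    have "(B *\<^sub>v x) $ r = (A *\<^sub>v x) $ r" using Bv[OF xc r] xo by simp
    thus "(A *\<^sub>v x) $ r = (e \<cdot>\<^sub>v x) $ r" using Bx by simp
  qed
  have xx: "x \<bullet> x > 0"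
  proof -
    obtain i where i: "i < n" "x $ i \<noteq> 0" using x0 xc by (metis carrier_vecD eq_vecI index_zero_vec)
    have "x $ i * x $ i \<le> (\<Sum>c<n. x $ c * x $ c)" by (rule member_le_sum) (use i in auto)
    moreover have "x $ i * x $ i > 0" using i(2) not_real_square_gt_zero by blast
    ultimately show ?thesis using sprod_sum[OF xc] by simp
  qed
  define v where "v = (1 / sqrt (x \<bullet> x)) \<cdot>\<^sub>v x"
  have vc': "v \<in> carrier_vec n" unfolding v_def using xc by simp
  have "v \<bullet> v = (1 / sqrt (x \<bullet> x)) * (1 / sqrt (x \<bullet> x)) * (x \<bullet> x)" unfolding v_def using xc by simp
  also have "\<dots> = 1" using xx by (simp add: field_simps)
  finally have vv: "v \<bullet> v = 1" .
  have vo: "\<forall>i<length vs. vs ! i \<bullet> v = 0" unfolding v_def m_def[symmetric] using xo vc xc by simp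
  have Av: "A *\<^sub>v v = e \<cdot>\<^sub>v v" unfolding v_def using Ax A xc
    by (simp add: mult_mat_vec smult_smult_assoc mult.commute)
  show ?thesis using vc' vv vo Av by blast
qed

lemma orthon_eig_exist:
  assumes S: "symm n A" and m: "m \<le> n"
  shows "\<exists>vs ds. length vs = m \<and> orthon n vs \<and> eig_list A vs ds"
  using m
proof (induct m)
  case 0
  show ?case by (rule exI[of _ "[]"], rule exI[of _ "[]"]) (simp add: orthon_def eig_list_def)
next
  case (Suc m)
  then obtain vs ds where l: "length vs = m" and O: "orthon n vs" and E: "eig_list A vs ds" by auto
  from deflate[OF S O E] Suc(2) l obtain v d where v: "v \<in> carrier_vec n" "v \<bullet> v = 1"
    "\<forall>i<length vs. vs ! i \<bullet> v = 0" "A *\<^sub>v v = d \<cdot>\<^sub>v v" by auto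
  have vc: "\<And>i. i < m \<Longrightarrow> vs ! i \<in> carrier_vec n" using O l unfolding orthon_def by auto
  have O': "orthon n (vs @ [v])"
    unfolding orthon_def
  proof (intro conjI allI impI)
    show "set (vs @ [v]) \<subseteq> carrier_vec n" using O v unfolding orthon_def by auto
    fix i j assume i: "i < length (vs @ [v])" and j: "j < length (vs @ [v])"
    show "(vs @ [v]) ! i \<bullet> (vs @ [v]) ! j = (if i = j then 1 else 0)"
    proof (cases "i < m")
      case True note iT = this
      show ?thesis
      proof (cases "j < m")
        case True thus ?thesis using O iT l unfolding orthon_def by (auto simp: nth_append)
      next
        case False hence "j = m" using j l by auto
        thus ?thesis using iT v l by (auto simp: nth_append)
      qed
    next
      case False hence im: "i = m" using i l by auto
      show ?thesis
      proof (cases "j < m")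
        case True
        have "v \<bullet> vs ! j = vs ! j \<bullet> v" using comm_scalar_prod[OF v(1) vc[OF True]] by simp
        thus ?thesis using True im v l by (auto simp: nth_append)
      next
        case False hence "j = m" using j l by auto
        thus ?thesis using im v l by (auto simp: nth_append)
      qed
    qed
  qed
  have E': "eig_list A (vs @ [v]) (ds @ [d])"
    using E v l unfolding eig_list_def by (auto simp: nth_append)
  show ?case using O' E' l by (intro exI[of _ "vs @ [v]"] exI[of _ "ds @ [d]"]) auto
qed

lemma spectral:
  assumes S: "symm n A"
  shows "\<exists>vs ds. length vs = n \<and> orthon n vs \<and> eig_list A vs ds \<and> char_poly A = (\<Prod>d\<leftarrow>ds. [:- d, 1:])"
proof -
  obtain vs ds where l: "length vs = n" and O: "orthon n vs" and E: "eig_list A vs ds"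
    using orthon_eig_exist[OF S le_refl] by auto
  have A: "A \<in> carrier_mat n n" using S by (rule symm_carrier)
  have vc: "\<And>i. i < n \<Longrightarrow> vs ! i \<in> carrier_vec n" using O l unfolding orthon_def by auto
  have on: "\<And>i j. i < n \<Longrightarrow> j < n \<Longrightarrow> vs ! i \<bullet> vs ! j = (if i = j then 1 else 0)"
    using O l unfolding orthon_def by auto
  have ev: "\<And>i. i < n \<Longrightarrow> A *\<^sub>v (vs ! i) = ds ! i \<cdot>\<^sub>v (vs ! i)" and ld: "length ds = n"
    using E l unfolding eig_list_def by auto
  define V where "V = mat_of_cols n vs"
  define D where "D = mat n n (\<lambda>(i,j). if i = j then ds ! i else (0::real))"
  define VT where "VT = transpose_mat V"
  have V: "V \<in> carrier_mat n n" unfolding V_def using l mat_of_cols_carrier(1)[of n vs] by simp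
  have VT: "VT \<in> carrier_mat n n" unfolding VT_def using V by simp
  have D: "D \<in> carrier_mat n n" unfolding D_def by simp
  have colV: "\<And>j. j < n \<Longrightarrow> col V j = vs ! j" unfolding V_def using vc l
    by (simp add: col_mat_of_cols)
  have VTV: "VT * V = 1\<^sub>m n"
  proof (rule eq_matI)
    fix i j assume i: "i < dim_row (1\<^sub>m n :: real mat)" and j: "j < dim_col (1\<^sub>m n :: real mat)"
    hence i: "i < n" and j: "j < n" by auto
    have "(VT * V) $$ (i,j) = col V i \<bullet> col V j" unfolding VT_def using V i j by simp
    thus "(VT * V) $$ (i,j) = 1\<^sub>m n $$ (i,j)" using i j colV on by simp
  qed (use V VT in auto)
  have VVT: "V * VT = 1\<^sub>m n" by (rule mat_mult_left_right_inverse[OF VT V VTV])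
  have AV: "A * V = V * D"
  proof (rule eq_matI)
    fix r j assume r: "r < dim_row (V * D)" and j: "j < dim_col (V * D)"
    hence r: "r < n" and j: "j < n" using V D by auto
    have "(A * V) $$ (r,j) = (A *\<^sub>v vs ! j) $ r" using A V r j colV by simp
    also have "\<dots> = ds ! j * vs ! j $ r" using ev[OF j] vc[OF j] r by simp
    also have "\<dots> = (V * D) $$ (r,j)"
    proof -
      have "(V * D) $$ (r,j) = (\<Sum>l<n. V $$ (r,l) * D $$ (l,j))"
        using V D r j by (simp add: scalar_prod_def atLeast0LessThan)
      also have "\<dots> = (\<Sum>l<n. if l = j then V $$ (r,j) * ds ! j else 0)"
        by (intro sum.cong refl) (use j in \<open>auto simp: D_def\<close>)
      also have "\<dots> = V $$ (r,j) * ds ! j" using j by simp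
      also have "V $$ (r,j) = vs ! j $ r" using colV[OF j] V r j by (metis carrier_matD(1) col_def index_vec)
      finally show ?thesis by simp
    qed
    finally show "(A * V) $$ (r,j) = (V * D) $$ (r,j)" .
  qed (use A V D in auto)
  have "A = A * (V * VT)" using A VVT by simp
  also have "\<dots> = (A * V) * VT" using A V VT by (simp add: assoc_mult_mat)
  also have "\<dots> = V * D * VT" unfolding AV ..
  finally have AVD: "A = V * D * VT" .
  have "similar_mat_wit A D V VT"
    unfolding similar_mat_wit_def Let_def using A D V VT VVT VTV AVD by auto
  hence "similar_mat A D" unfolding similar_mat_def by blast
  hence "char_poly A = char_poly D" by (rule char_poly_similar)
  also have "\<dots> = (\<Prod>a\<leftarrow>diag_mat D. [:- a, 1:])"
    by (rule char_poly_upper_triangular[OF D]) (auto simp: upper_triangular_def D_def)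
  also have "diag_mat D = ds" unfolding diag_mat_def D_def using ld
    by (intro nth_equalityI) auto
  finally show ?thesis using l O E by blast
qed

lemma prod_remove1:
  fixes f :: "'a \<Rightarrow> 'b::comm_monoid_mult"
  shows "x \<in> set ys \<Longrightarrow> (\<Prod>a\<leftarrow>ys. f a) = f x * (\<Prod>a\<leftarrow>remove1 x ys. f a)"
  by (induct ys) (auto simp: mult.left_commute)

lemma prod_mset_eq:
  fixes f :: "'a \<Rightarrow> 'b::comm_monoid_mult"
  shows "mset xs = mset ys \<Longrightarrow> (\<Prod>a\<leftarrow>xs. f a) = (\<Prod>a\<leftarrow>ys. f a)"
  by (metis mset_map prod_mset_prod_list)

lemma lin_factors_mset:
  "(\<Prod>a\<leftarrow>xs. [:- a, 1:]) = (\<Prod>(a::real)\<leftarrow>ys. [:- a, 1:]) \<Longrightarrow> mset xs = mset ys"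
proof (induct xs arbitrary: ys)
  case Nil
  hence "degree (\<Prod>(a::real)\<leftarrow>ys. [:- a, 1:]) = 0" by (metis degree_1 prod_list.Nil list.map(1))
  hence "length ys = 0" using degree_linear_factors[of uminus ys] by simp
  thus ?case by simp
next
  case (Cons x xs)
  have "poly (\<Prod>a\<leftarrow>ys. [:- a, 1:]) x = 0" unfolding Cons(2)[symmetric] by simp
  hence x: "x \<in> set ys" by (auto simp: poly_prod_list_zero_iff)
  have "[:- x, 1:] * (\<Prod>a\<leftarrow>xs. [:- a, 1:]) = [:- x, 1:] * (\<Prod>a\<leftarrow>remove1 x ys. [:- a, 1:])"
    using Cons(2) prod_remove1[OF x, of "\<lambda>a. [:- a, 1:]"] by simp
  moreover have "[:- x, 1:] \<noteq> (0::real poly)" by simp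
  ultimately have "(\<Prod>a\<leftarrow>xs. [:- a, 1:]) = (\<Prod>a\<leftarrow>remove1 x ys. [:- a, 1:])" by (metis mult_left_cancel)
  from Cons(1)[OF this] have "mset xs = mset (remove1 x ys)" .
  thus ?case using x by simp
qed

lemma eigs_desc_char:
  assumes A: "A \<in> carrier_mat n n" and c: "char_poly A = (\<Prod>d\<leftarrow>ds. [:- d, 1:])"
  shows "eigs_desc A = rev (sort ds)"
proof -
  have ld: "length ds = n" using degree_monic_char_poly[OF A] c degree_linear_factors[of uminus ds] by simp
  show ?thesis unfolding eigs_desc_def
  proof (rule the_equality)
    show "length (rev (sort ds)) = dim_row A \<and> sorted (rev (rev (sort ds))) \<and>
      char_poly A = (\<Prod>a\<leftarrow>rev (sort ds). [:- a, 1:])"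
    proof (intro conjI)
      show "length (rev (sort ds)) = dim_row A" using A ld by simp
      show "sorted (rev (rev (sort ds)))" by simp
      have "mset (rev (sort ds)) = mset ds" by simp
      from prod_mset_eq[OF this, of "\<lambda>a. [:- a, 1:]"]
      show "char_poly A = (\<Prod>a\<leftarrow>rev (sort ds). [:- a, 1:])" using c by simp
    qed
  next
    fix ls assume "length ls = dim_row A \<and> sorted (rev ls) \<and> char_poly A = (\<Prod>a\<leftarrow>ls. [:- a, 1:])"
    hence s: "sorted (rev ls)" and pl: "(\<Prod>a\<leftarrow>ls. [:- a, 1:]) = (\<Prod>a\<leftarrow>ds. [:- a, 1:])" using c by auto
    have m: "mset ls = mset ds" by (rule lin_factors_mset[OF pl])
    have "sort ds = rev ls" by (rule properties_for_sort) (use s m in simp_all)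
    thus "ls = rev (sort ds)" by simp
  qed
qed

lemma rank_trace:
  fixes Q :: "real mat"
  assumes Qc: "Q \<in> carrier_mat N N" and QQ: "Q * Q = Q"
  shows "real (vec_space.rank N Q) = mtr Q"
proof -
  interpret vec_space "TYPE(real)" N .
  obtain S where max: "maximal S (\<lambda>T. T \<subseteq> set (cols Q) \<and> lin_indpt T)"
    using maximal_exists[of "(\<lambda>T. T \<subseteq> set (cols Q) \<and> lin_indpt T)" "card (set (cols Q))" "{}"]
    by (meson List.finite_set card_mono empty_iff empty_subsetI finite_lin_indpt2 rev_finite_subset)
  have rk: "rank Q = card S" by (rule rank_card_indpt[OF Qc max])
  have SQ: "S \<subseteq> set (cols Q)" and li: "lin_indpt S" using max unfolding maximal_def by auto
  have colsQ: "set (cols Q) \<subseteq> carrier_vec N" using Qc cols_dim by blast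
  have Sc: "S \<subseteq> carrier_vec N" using SQ colsQ by blast
  have fS: "finite S" using SQ finite_subset by blast
  obtain cs where cs: "distinct cs" "set cs = S" using finite_distinct_list[OF fS] by auto
  define r where "r = length cs"
  have rS: "card S = r" unfolding r_def using cs distinct_card by metis
  define C where "C = mat_of_cols N cs"
  have C: "C \<in> carrier_mat N r" unfolding C_def r_def by simp
  have colsC: "cols C = cs" unfolding C_def using cs Sc by simp
  have colC: "\<And>l. l < r \<Longrightarrow> col C l = cs ! l" using colsC C by (metis cols_nth carrier_matD(2))
  have inspan: "q \<in> span S" if q: "q \<in> set (cols Q)" for q
  proof (cases "q \<in> S")
    case True thus ?thesis using in_own_span[OF Sc] by blast
  next
    case False
    show ?thesis
    proof (rule ccontr)
      assume "q \<notin> span S"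
      hence "\<not> lin_dep (S \<union> {q})" using lin_dep_iff_in_span[OF Sc li _ False] q colsQ by blast
      moreover have "S \<union> {q} \<subseteq> set (cols Q)" using SQ q by blast
      ultimately have "S \<union> {q} = S" using max unfolding maximal_def by blast
      thus False using False by blast
    qed
  qed
  have "\<exists>m. m \<in> carrier_vec r \<and> col Q j = C *\<^sub>v m" if j: "j < N" for j
  proof -
    have q: "col Q j \<in> set (cols Q)" using j Qc by (metis cols_length cols_nth carrier_matD(2) nth_mem)
    from finite_in_span[OF fS Sc inspan[OF q]] obtain a where a: "lincomb a S = col Q j" by auto
    have "C *\<^sub>v vec r (\<lambda>i. a (col C i)) = lincomb a (set (cols C))"
      by (rule mat_mult_eq_lincomb[OF C]) (simp add: colsC cs)
    thus ?thesis using a colsC cs by (intro exI[of _ "vec r (\<lambda>i. a (col C i))"]) auto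
  qed
  then obtain mf where mf: "\<And>j. j < N \<Longrightarrow> mf j \<in> carrier_vec r \<and> col Q j = C *\<^sub>v mf j" by metis
  define M where "M = mat_of_cols r (map mf [0..<N])"
  have M: "M \<in> carrier_mat r N" unfolding M_def by (metis length_map length_upt minus_nat.diff_0 mat_of_cols_carrier(1))
  have colM: "\<And>j. j < N \<Longrightarrow> col M j = mf j" unfolding M_def using mf by simp
  have QCM: "Q = C * M"
  proof (rule mat_col_eqI)
    fix j assume "j < dim_col (C * M)"
    hence j: "j < N" using M by simp
    show "col Q j = col (C * M) j" using col_mult2[OF C M j] colM[OF j] mf[OF j] by simp
  qed (use Qc C M in auto)
  have QC: "Q * C = C"
  proof (rule mat_col_eqI)
    fix l assume "l < dim_col C"
    hence l: "l < r" using C by simp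
    have "cs ! l \<in> set (cols Q)" using cs SQ l r_def by auto
    then obtain p where p: "p < N" "cs ! l = col Q p" using Qc by (metis cols_length cols_nth carrier_matD(2) in_set_conv_nth)
    have "col (Q * C) l = Q *\<^sub>v col C l" using col_mult2[OF Qc C l] by simp
    also have "\<dots> = Q *\<^sub>v col Q p" using colC[OF l] p by simp
    also have "\<dots> = col (Q * Q) p" using col_mult2[OF Qc Qc p(1)] by simp
    also have "\<dots> = col C l" using QQ p colC[OF l] by simp
    finally show "col (Q * C) l = col C l" .
  qed (use Qc C in auto)
  have CMC: "C * (M * C) = C" using QC QCM C M by (simp add: assoc_mult_mat)
  have MC: "M * C = 1\<^sub>m r"
  proof (rule mat_col_eqI)
    fix l assume "l < dim_col (1\<^sub>m r :: real mat)"
    hence l: "l < r" by simp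
    define x where "x = col (M * C) l - unit_vec r l"
    have xc: "x \<in> carrier_vec r" unfolding x_def using M C l by simp
    have "C *\<^sub>v col (M * C) l = col (C * (M * C)) l" using col_mult2[OF C _ l, of "M * C"] M C by simp
    also have "\<dots> = col C l" using CMC by simp
    also have "\<dots> = C *\<^sub>v unit_vec r l" using C l by (intro eq_vecI) (auto simp: scalar_prod_right_unit)
    finally have "C *\<^sub>v x = 0\<^sub>v N" unfolding x_def using C M l
      by (simp add: mult_minus_distrib_mat_vec)
    have "x = 0\<^sub>v r"
    proof (rule ccontr)
      assume "x \<noteq> 0\<^sub>v r"
      from lin_depI[OF C xc this \<open>C *\<^sub>v x = 0\<^sub>v N\<close>] have "lin_dep (set (cols C))" using colsC cs by simp
      thus False using li colsC cs by simp
    qed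
    have "col (M * C) l = unit_vec r l"
    proof (rule eq_vecI)
      fix i assume i: "i < dim_vec (unit_vec r l)"
      hence "x $ i = 0" using \<open>x = 0\<^sub>v r\<close> by simp
      thus "col (M * C) l $ i = unit_vec r l $ i" unfolding x_def using i M C l by simp
    qed (use M C in simp)
    thus "col (M * C) l = col (1\<^sub>m r) l" using l by simp
  qed (use M C in auto)
  have "mtr Q = mtr (C * M)" using QCM by simp
  also have "\<dots> = mtr (M * C)" by (rule mtr_comm[OF C M])
  also have "\<dots> = real r" unfolding MC mtr_def by simp
  finally show ?thesis using rk rS by simp
qed

lemma abs_le_quad:
  fixes x :: real assumes N: "N > 0"
  shows "\<bar>x\<bar> \<le> (1 / N + N * x^2) / 2"
proof -
  have "0 \<le> (N * \<bar>x\<bar> - 1)^2" by simp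
  hence "2 * N * \<bar>x\<bar> \<le> N^2 * x^2 + 1" by (simp add: power2_eq_square algebra_simps)
  hence "\<bar>x\<bar> \<le> (N^2 * x^2 + 1) / (2 * N)" using N by (simp add: pos_le_divide_eq mult.commute mult.left_commute)
  also have "(N^2 * x^2 + 1) / (2 * N) = (1 / N + N * x^2) / 2" using N by (simp add: field_simps power2_eq_square)
  finally show ?thesis .
qed

lemma proj_bound:
  assumes Q: "Q \<in> proj_set r N"
  shows "(\<Sum>i<N. \<Sum>j<N. \<bar>Q $$ (i,j)\<bar>) \<le> real N * (1 + real r) / 2"
proof (cases "N = 0")
  case True thus ?thesis by simp
next
  case False
  hence N: "real N > 0" by simp
  have Qc: "Q \<in> carrier_mat N N" and T: "transpose_mat Q = Q" and QQ: "Q * Q = Q"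
    and rk: "vec_space.rank N Q = r" using Q unfolding proj_set_def by auto
  have sy: "Q $$ (i,j) = Q $$ (j,i)" if "i < N" "j < N" for i j
    using T that Qc by (metis carrier_matD(1) carrier_matD(2) index_transpose_mat(1))
  have diag: "Q $$ (j,j) = (\<Sum>i<N. (Q $$ (i,j))^2)" if j: "j < N" for j
  proof -
    have "Q $$ (j,j) = (Q * Q) $$ (j,j)" using QQ by simp
    also have "\<dots> = (\<Sum>i<N. Q $$ (j,i) * Q $$ (i,j))" using Qc j by (simp add: scalar_prod_def atLeast0LessThan)
    also have "\<dots> = (\<Sum>i<N. (Q $$ (i,j))^2)" by (intro sum.cong refl) (simp add: sy j power2_eq_square)
    finally show ?thesis .
  qed
  have "(\<Sum>j<N. \<Sum>i<N. (Q $$ (i,j))^2) = mtr Q" unfolding mtr_def using Qc by (simp add: diag)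
  also have "\<dots> = real r" using rank_trace[OF Qc QQ] rk by simp
  finally have sq: "(\<Sum>j<N. \<Sum>i<N. (Q $$ (i,j))^2) = real r" .
  have "(\<Sum>i<N. \<Sum>j<N. \<bar>Q $$ (i,j)\<bar>) \<le> (\<Sum>i<N. \<Sum>j<N. (1 / real N + real N * (Q $$ (i,j))^2) / 2)"
    by (intro sum_mono abs_le_quad N)
  also have "\<dots> = (real N * real N * (1 / real N) + real N * (\<Sum>i<N. \<Sum>j<N. (Q $$ (i,j))^2)) / 2"
    by (simp add: sum.distrib sum_divide_distrib sum_distrib_left add_divide_distrib)
  also have "(\<Sum>i<N. \<Sum>j<N. (Q $$ (i,j))^2) = real r" using sq by (subst sum.swap) simp
  finally show ?thesis using N by (simp add: field_simps)
qed

lemma lambda_R_lower: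
  assumes Q: "Q \<in> proj_set r N" and rN: "r \<le> N" and N: "N > 0"
  shows "(\<Sum>i<N. \<Sum>j<N. \<bar>Q $$ (i,j)\<bar>) \<le> real N * lambda_R r"
proof -
  define g :: "nat \<Rightarrow> real mat \<Rightarrow> real" where "g = (\<lambda>N Q. (\<Sum>i<N. \<Sum>j<N. \<bar>Q $$ (i,j)\<bar>))"
  define f where "f = (\<lambda>N. (1 / real N) * (SUP Q\<in>proj_set r N. g N Q))"
  have bi: "bdd_above (g N' ` proj_set r N')" for N'
    unfolding g_def by (rule bdd_aboveI2[of _ _ "real N' * (1 + real r) / 2"]) (rule proj_bound)
  have fb: "f N' \<le> max ((1 + real r) / 2) \<bar>Sup ({}::real set)\<bar>" for N'
  proof (cases "proj_set r N' = {}")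
    case True
    have "f N' = (1 / real N') * Sup {}" unfolding f_def True by simp
    also have "\<dots> \<le> \<bar>Sup ({}::real set)\<bar>"
    proof (cases "N' = 0")
      case False
      hence "1 / real N' \<le> 1" "0 \<le> 1 / real N'" by auto
      thus ?thesis by (metis abs_ge_self abs_mult abs_of_nonneg mult_left_le_one_le abs_ge_zero order_trans)
    qed simp
    finally show ?thesis by simp
  next
    case False
    have "(SUP Q\<in>proj_set r N'. g N' Q) \<le> real N' * (1 + real r) / 2"
      by (rule cSUP_least[OF False]) (unfold g_def, rule proj_bound)
    hence "f N' \<le> (1 / real N') * (real N' * (1 + real r) / 2)" unfolding f_def
      by (intro mult_left_mono) auto
    also have "\<dots> \<le> (1 + real r) / 2" by (cases "N' = 0") auto
    finally show ?thesis by (simp add: le_max_iff_disj)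
  qed
  have bo: "bdd_above (f ` {r..})" by (rule bdd_aboveI2[of _ _ "max ((1 + real r) / 2) \<bar>Sup ({}::real set)\<bar>"]) (rule fb)
  have "g N Q \<le> (SUP Q\<in>proj_set r N. g N Q)" by (rule cSUP_upper[OF Q bi])
  hence "(1 / real N) * g N Q \<le> f N" unfolding f_def using N by (intro mult_left_mono) auto
  also have "f N \<le> (SUP N\<in>{r..}. f N)" by (rule cSUP_upper[OF _ bo]) (use rN in auto)
  also have "(SUP N\<in>{r..}. f N) = lambda_R r" unfolding lambda_R_def f_def g_def by simp
  finally have "(1 / real N) * g N Q \<le> lambda_R r" .
  thus ?thesis unfolding g_def using N by (simp add: field_simps)
qed

lemma swap3: "(\<Sum>r\<in>A. \<Sum>t\<in>B. \<Sum>j\<in>C. f r t j) = (\<Sum>j\<in>C. \<Sum>r\<in>A. \<Sum>t\<in>B. f r t j)"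
proof -
  have "(\<Sum>r\<in>A. \<Sum>t\<in>B. \<Sum>j\<in>C. f r t j) = (\<Sum>r\<in>A. \<Sum>j\<in>C. \<Sum>t\<in>B. f r t j)"
    by (rule sum.cong[OF refl], rule sum.swap)
  also have "\<dots> = (\<Sum>j\<in>C. \<Sum>r\<in>A. \<Sum>t\<in>B. f r t j)" by (rule sum.swap)
  finally show ?thesis .
qed

locale onb =
  fixes n :: nat and J :: "nat set" and u :: "nat \<Rightarrow> nat \<Rightarrow> real"
  assumes J: "J \<subseteq> {..<n}"
    and ip: "\<And>j l. j \<in> J \<Longrightarrow> l \<in> J \<Longrightarrow> (\<Sum>r<n. u j r * u l r) = (if j = l then 1 else 0)"
begin

lemma finJ: "finite J" using J finite_subset by blast

lemma expand:
  "(\<Sum>t<n. (\<Sum>j\<in>J. x j * u j t) * (\<Sum>l\<in>J. y l * u l t)) = (\<Sum>j\<in>J. x j * y j)"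
proof -
  have "(\<Sum>t<n. (\<Sum>j\<in>J. x j * u j t) * (\<Sum>l\<in>J. y l * u l t)) =
        (\<Sum>t<n. \<Sum>j\<in>J. \<Sum>l\<in>J. x j * y l * (u j t * u l t))"
    unfolding sum_product by (intro sum.cong refl) (simp add: mult.commute mult.left_commute)
  also have "\<dots> = (\<Sum>j\<in>J. \<Sum>t<n. \<Sum>l\<in>J. x j * y l * (u j t * u l t))" by (rule sum.swap)
  also have "\<dots> = (\<Sum>j\<in>J. \<Sum>l\<in>J. \<Sum>t<n. x j * y l * (u j t * u l t))"
    by (rule sum.cong[OF refl], rule sum.swap)
  also have "\<dots> = (\<Sum>j\<in>J. \<Sum>l\<in>J. x j * y l * (if j = l then 1 else 0))"
    by (intro sum.cong refl) (simp add: sum_distrib_left[symmetric] ip)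
  also have "\<dots> = (\<Sum>j\<in>J. x j * y j)" using finJ by (simp add: if_distrib cong: if_cong)
  finally show ?thesis .
qed

lemma proj_construct:
  assumes S: "symm n A"
    and eig: "\<And>j r. j \<in> J \<Longrightarrow> r < n \<Longrightarrow> (\<Sum>t<n. A $$ (r,t) * u j t) = d j * u j r"
    and dc: "\<And>j. j \<in> J \<Longrightarrow> c \<le> d j"
    and cJ: "card J = k" and k2: "2 \<le> k"
    and diag0: "\<And>r. r < n \<Longrightarrow> A $$ (r,r) = 0"
    and ent: "\<And>r t. r < n \<Longrightarrow> t < n \<Longrightarrow> A $$ (r,t) = 0 \<or> A $$ (r,t) = 1"
  shows "\<exists>Q. Q \<in> proj_set (k - 1) n \<and> 2 * real (k - 1) * (c + 1) \<le> (\<Sum>r<n. \<Sum>t<n. \<bar>Q $$ (r,t)\<bar>)"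
proof -
  have Ac: "A \<in> carrier_mat n n" using S by (rule symm_carrier)
  have Asy: "\<And>r t. r < n \<Longrightarrow> t < n \<Longrightarrow> A $$ (r,t) = A $$ (t,r)" using S unfolding symm_def by auto
  have Jne: "J \<noteq> {}" using cJ k2 by auto
  then obtain j0 where j0: "j0 \<in> J" by auto
  define s where "s j = (\<Sum>r<n. u j r)" for j
  define \<sigma> where "\<sigma> = (\<Sum>j\<in>J. (s j)^2)"
  define a where "a j = (if \<sigma> = 0 then (if j = j0 then 1 else 0) else s j / sqrt \<sigma>)" for j
  define z where "z r = (\<Sum>j\<in>J. a j * u j r)" for r
  define P where "P r t = (\<Sum>j\<in>J. u j r * u j t)" for r t
  define q where "q r t = P r t - z r * z t" for r t
  define Q where "Q = mat n n (\<lambda>(r,t). q r t)"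
  have sig0: "\<sigma> \<ge> 0" unfolding \<sigma>_def by (intro sum_nonneg) auto
  have a1: "(\<Sum>j\<in>J. a j * a j) = 1"
  proof (cases "\<sigma> = 0")
    case True
    hence "(\<Sum>j\<in>J. a j * a j) = (\<Sum>j\<in>J. if j = j0 then 1 else 0)"
      unfolding a_def by (intro sum.cong refl) simp
    thus ?thesis using j0 finJ by simp
  next
    case False
    hence "\<sigma> > 0" using sig0 by simp
    hence "(\<Sum>j\<in>J. a j * a j) = (\<Sum>j\<in>J. (s j)^2) / \<sigma>" unfolding a_def using False
      by (simp add: sum_divide_distrib power2_eq_square)
    thus ?thesis using False unfolding \<sigma>_def by simp
  qed
  have a2: "(\<Sum>j\<in>J. a j * s j)^2 = \<sigma>"
  proof (cases "\<sigma> = 0")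
    case True
    hence "\<forall>j\<in>J. s j = 0" unfolding \<sigma>_def using finJ by (simp add: sum_nonneg_eq_0_iff)
    thus ?thesis using True by simp
  next
    case False
    hence pos: "\<sigma> > 0" using sig0 by simp
    have "(\<Sum>j\<in>J. a j * s j) = (\<Sum>j\<in>J. (s j)^2) / sqrt \<sigma>" unfolding a_def using False
      by (simp add: sum_divide_distrib power2_eq_square)
    also have "\<dots> = sqrt \<sigma>" unfolding \<sigma>_def[symmetric] using pos
      by (metis real_div_sqrt less_eq_real_def)
    finally show ?thesis using pos by simp
  qed
  have Jn: "\<And>j. j \<in> J \<Longrightarrow> j < n" using J by auto
  have Psym: "P r t = P t r" for r t unfolding P_def by (simp add: mult.commute)
  have ePP: "(\<Sum>t<n. P r t * P s t) = P r s" for r s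
    using expand[of "\<lambda>j. u j r" "\<lambda>j. u j s"] unfolding P_def by simp
  have ePz: "(\<Sum>t<n. P r t * z t) = z r" for r
    using expand[of "\<lambda>j. u j r" a] unfolding P_def z_def by (simp add: mult.commute)
  have ezz: "(\<Sum>t<n. z t * z t) = 1"
    using expand[of a a] a1 unfolding z_def by simp
  have sPd: "(\<Sum>r<n. P r r) = real k"
  proof -
    have "(\<Sum>r<n. P r r) = (\<Sum>j\<in>J. \<Sum>r<n. u j r * u j r)" unfolding P_def by (rule sum.swap)
    also have "\<dots> = (\<Sum>j\<in>J. 1)" by (intro sum.cong refl) (simp add: ip)
    finally show ?thesis using cJ by simp
  qed
  have Qc: "Q \<in> carrier_mat n n" unfolding Q_def by simp
  have QT: "transpose_mat Q = Q" unfolding Q_def q_def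
    by (rule eq_matI) (auto simp: Psym mult.commute)
  have QQ: "Q * Q = Q"
  proof (rule eq_matI)
    fix r s assume "r < dim_row Q" "s < dim_col Q"
    hence r: "r < n" and s: "s < n" unfolding Q_def by auto
    have "(Q * Q) $$ (r,s) = (\<Sum>t<n. q r t * q t s)"
      using r s unfolding Q_def by (simp add: scalar_prod_def atLeast0LessThan)
    also have "\<dots> = (\<Sum>t<n. P r t * P s t - z s * (P r t * z t) - z r * (P s t * z t) + z r * z s * (z t * z t))"
      unfolding q_def by (intro sum.cong refl) (simp add: Psym[of _ s] algebra_simps)
    also have "\<dots> = P r s - z s * z r - z r * z s + z r * z s"
      by (simp add: sum.distrib sum_subtractf sum_distrib_left[symmetric] ePP ePz ezz)
    also have "\<dots> = Q $$ (r,s)" using r s unfolding Q_def q_def by simp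
    finally show "(Q * Q) $$ (r,s) = Q $$ (r,s)" .
  qed (auto simp: Q_def)
  have trQ: "mtr Q = real k - 1"
  proof -
    have "mtr Q = (\<Sum>r<n. P r r - z r * z r)" unfolding mtr_def Q_def q_def by simp
    also have "\<dots> = real k - 1" using sPd ezz by (simp add: sum_subtractf)
    finally show ?thesis .
  qed
  have rk: "vec_space.rank n Q = k - 1" using rank_trace[OF Qc QQ] trQ k2 by simp
  have QP: "Q \<in> proj_set (k - 1) n" unfolding proj_set_def using Qc QT QQ rk by simp
  have PA: "(\<Sum>t<n. P r t * A $$ (r,t)) = (\<Sum>j\<in>J. d j * u j r * u j r)" if r: "r < n" for r
  proof -
    have "(\<Sum>t<n. P r t * A $$ (r,t)) = (\<Sum>j\<in>J. u j r * (\<Sum>t<n. A $$ (r,t) * u j t))"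
      unfolding P_def sum_distrib_right sum_distrib_left
      by (subst sum.swap) (simp add: mult.commute mult.left_commute)
    also have "\<dots> = (\<Sum>j\<in>J. d j * u j r * u j r)" by (intro sum.cong refl) (simp add: eig r)
    finally show ?thesis .
  qed
  have zA: "(\<Sum>t<n. z t * A $$ (r,t)) = (\<Sum>j\<in>J. (a j * d j) * u j r)" if r: "r < n" for r
  proof -
    have "(\<Sum>t<n. z t * A $$ (r,t)) = (\<Sum>j\<in>J. a j * (\<Sum>t<n. A $$ (r,t) * u j t))"
      unfolding z_def sum_distrib_right sum_distrib_left
      by (subst sum.swap) (simp add: mult.commute mult.left_commute)
    also have "\<dots> = (\<Sum>j\<in>J. (a j * d j) * u j r)" by (intro sum.cong refl) (simp add: eig r)
    finally show ?thesis .
  qed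
  have SA: "(\<Sum>r<n. \<Sum>t<n. q r t * A $$ (r,t)) = (\<Sum>j\<in>J. d j) - (\<Sum>j\<in>J. a j * (a j * d j))"
  proof -
    have "(\<Sum>r<n. \<Sum>t<n. q r t * A $$ (r,t)) = (\<Sum>r<n. (\<Sum>t<n. P r t * A $$ (r,t)) - z r * (\<Sum>t<n. z t * A $$ (r,t)))"
      unfolding q_def by (intro sum.cong refl) (simp add: sum_subtractf sum_distrib_left algebra_simps)
    also have "\<dots> = (\<Sum>r<n. (\<Sum>j\<in>J. d j * u j r * u j r) - z r * (\<Sum>j\<in>J. (a j * d j) * u j r))"
      by (intro sum.cong refl) (simp add: PA zA)
    also have "\<dots> = (\<Sum>r<n. \<Sum>j\<in>J. d j * u j r * u j r) - (\<Sum>r<n. z r * (\<Sum>j\<in>J. (a j * d j) * u j r))"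
      by (simp add: sum_subtractf)
    also have "(\<Sum>r<n. \<Sum>j\<in>J. d j * u j r * u j r) = (\<Sum>j\<in>J. d j)"
    proof -
      have "(\<Sum>r<n. \<Sum>j\<in>J. d j * u j r * u j r) = (\<Sum>j\<in>J. d j * (\<Sum>r<n. u j r * u j r))"
        by (subst sum.swap) (simp add: sum_distrib_left mult.assoc)
      thus ?thesis by (simp add: ip)
    qed
    also have "(\<Sum>r<n. z r * (\<Sum>j\<in>J. (a j * d j) * u j r)) = (\<Sum>j\<in>J. a j * (a j * d j))"
      unfolding z_def by (rule expand)
    finally show ?thesis .
  qed
  have S1: "(\<Sum>r<n. \<Sum>t<n. q r t) = 0"
  proof -
    have "(\<Sum>r<n. \<Sum>t<n. P r t) = (\<Sum>j\<in>J. \<Sum>r<n. \<Sum>t<n. u j r * u j t)" unfolding P_def by (rule swap3)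
    also have "\<dots> = \<sigma>" unfolding \<sigma>_def s_def by (simp add: sum_product power2_eq_square)
    finally have e1: "(\<Sum>r<n. \<Sum>t<n. P r t) = \<sigma>" .
    have zs: "(\<Sum>r<n. z r) = (\<Sum>j\<in>J. a j * s j)" unfolding z_def s_def
      by (subst sum.swap) (simp add: sum_distrib_left)
    have "(\<Sum>r<n. \<Sum>t<n. z r * z t) = (\<Sum>r<n. z r) * (\<Sum>t<n. z t)" by (simp add: sum_product)
    also have "\<dots> = \<sigma>" using zs a2 by (simp add: power2_eq_square)
    finally have e2: "(\<Sum>r<n. \<Sum>t<n. z r * z t) = \<sigma>" .
    show ?thesis unfolding q_def using e1 e2 by (simp add: sum_subtractf)
  qed
  have SI: "(\<Sum>r<n. q r r) = real k - 1" using sPd ezz unfolding q_def by (simp add: sum_subtractf)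
  define Bm where "Bm r t = 2 * A $$ (r,t) + 2 * (if r = t then 1 else 0) - 1" for r t
  have Bb: "\<bar>Bm r t\<bar> \<le> 1" if "r < n" "t < n" for r t
    using ent[OF that] diag0[OF that(1)] unfolding Bm_def by (cases "r = t") auto
  have SB: "(\<Sum>r<n. \<Sum>t<n. q r t * Bm r t) = 2 * (\<Sum>r<n. \<Sum>t<n. q r t * A $$ (r,t)) + 2 * (\<Sum>r<n. q r r) - (\<Sum>r<n. \<Sum>t<n. q r t)"
  proof -
    have "(\<Sum>r<n. \<Sum>t<n. q r t * Bm r t) = (\<Sum>r<n. 2 * (\<Sum>t<n. q r t * A $$ (r,t)) + 2 * q r r - (\<Sum>t<n. q r t))"
    proof (intro sum.cong refl)
      fix r assume r: "r \<in> {..<n}"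
      have "(\<Sum>t<n. q r t * Bm r t) = (\<Sum>t<n. 2 * (q r t * A $$ (r,t)) + (if t = r then 2 * q r r else 0) - q r t)"
        unfolding Bm_def by (intro sum.cong refl) (auto simp: algebra_simps)
      also have "\<dots> = 2 * (\<Sum>t<n. q r t * A $$ (r,t)) + 2 * q r r - (\<Sum>t<n. q r t)"
        using r by (simp add: sum.distrib sum_subtractf sum_distrib_left)
      finally show "(\<Sum>t<n. q r t * Bm r t) = 2 * (\<Sum>t<n. q r t * A $$ (r,t)) + 2 * q r r - (\<Sum>t<n. q r t)" .
    qed
    also have "\<dots> = 2 * (\<Sum>r<n. \<Sum>t<n. q r t * A $$ (r,t)) + 2 * (\<Sum>r<n. q r r) - (\<Sum>r<n. \<Sum>t<n. q r t)"
      by (simp add: sum.distrib sum_subtractf sum_distrib_left)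
    finally show ?thesis .
  qed
  have aa: "a j * a j \<le> 1" if j: "j \<in> J" for j
    using member_le_sum[of j J "\<lambda>j. a j * a j"] j finJ a1 by simp
  have SAc: "(\<Sum>j\<in>J. d j) - (\<Sum>j\<in>J. a j * (a j * d j)) \<ge> c * (real k - 1)"
  proof -
    have "(\<Sum>j\<in>J. d j) - (\<Sum>j\<in>J. a j * (a j * d j)) = (\<Sum>j\<in>J. (1 - a j * a j) * d j)"
      by (simp add: sum_subtractf algebra_simps)
    also have "\<dots> \<ge> (\<Sum>j\<in>J. (1 - a j * a j) * c)"
      by (intro sum_mono mult_left_mono dc) (use aa in auto)
    also have "(\<Sum>j\<in>J. (1 - a j * a j) * c) = c * (real k - 1)"
    proof -
      have "(\<Sum>j\<in>J. (1 - a j * a j) * c) = (\<Sum>j\<in>J. (1 - a j * a j)) * c" by (simp add: sum_distrib_right)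
      also have "(\<Sum>j\<in>J. (1 - a j * a j)) = real k - 1" using a1 cJ by (simp add: sum_subtractf)
      finally show ?thesis by simp
    qed
    finally show ?thesis .
  qed
  have "2 * real (k - 1) * (c + 1) \<le> (\<Sum>r<n. \<Sum>t<n. q r t * Bm r t)"
    using SB SA S1 SI SAc k2 by (simp add: of_nat_diff algebra_simps)
  also have "\<dots> \<le> (\<Sum>r<n. \<Sum>t<n. \<bar>q r t\<bar>)"
  proof (intro sum_mono)
    fix r t assume "r \<in> {..<n}" "t \<in> {..<n}"
    hence "\<bar>Bm r t\<bar> \<le> 1" using Bb by auto
    hence "\<bar>q r t * Bm r t\<bar> \<le> \<bar>q r t\<bar>" by (simp add: abs_mult mult_left_le)
    thus "q r t * Bm r t \<le> \<bar>q r t\<bar>" by linarith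
  qed
  also have "\<dots> = (\<Sum>r<n. \<Sum>t<n. \<bar>Q $$ (r,t)\<bar>)" unfolding Q_def by simp
  finally show ?thesis using QP by blast
qed

end

lemma graph_bound:
  assumes k2: "2 \<le> k" and kn: "k \<le> n" and G: "simple_graph n E"
  shows "graph_eig k n E \<le> lambda_R (k - 1) / (2 * real (k - 1)) * real n - 1"
proof -
  define A where "A = adj_mat n E"
  have Ac: "A \<in> carrier_mat n n" unfolding A_def adj_mat_def by simp
  have Aent: "\<And>r t. r < n \<Longrightarrow> t < n \<Longrightarrow> A $$ (r,t) = (if E r t then 1 else 0)"
    unfolding A_def adj_mat_def by simp
  have S: "symm n A" unfolding symm_def using Ac Aent G unfolding simple_graph_def by auto
  obtain vs ds where l: "length vs = n" and O: "orthon n vs" and EL: "eig_list A vs ds"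
    and cp: "char_poly A = (\<Prod>d\<leftarrow>ds. [:- d, 1:])" using spectral[OF S] by blast
  have ld: "length ds = n" using EL l unfolding eig_list_def by simp
  have ed: "eigs_desc A = rev (sort ds)" by (rule eigs_desc_char[OF Ac cp])
  define \<mu> where "\<mu> = rev (sort ds)"
  define c where "c = \<mu> ! (k - 1)"
  have gc: "graph_eig k n E = c" unfolding graph_eig_def c_def \<mu>_def A_def[symmetric] ed ..
  have lmu: "length \<mu> = n" unfolding \<mu>_def using ld by simp
  have "{..<k} \<subseteq> {i. i < length \<mu> \<and> c \<le> \<mu> ! i}"
  proof
    fix i assume "i \<in> {..<k}"
    hence i: "i < k" by simp
    have "sort ds ! (n - k) \<le> sort ds ! (n - Suc i)"
      by (rule sorted_nth_mono) (use i kn ld in auto)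
    moreover have "\<mu> ! i = sort ds ! (n - Suc i)" unfolding \<mu>_def using i kn ld by (simp add: rev_nth)
    moreover have "c = sort ds ! (n - k)" unfolding c_def \<mu>_def using k2 kn ld
      by (simp add: rev_nth Suc_diff_Suc)
    ultimately show "i \<in> {i. i < length \<mu> \<and> c \<le> \<mu> ! i}" using i kn lmu by simp
  qed
  hence "card {..<k} \<le> card {i. i < length \<mu> \<and> c \<le> \<mu> ! i}"
    by (intro card_mono) auto
  hence "k \<le> card {i. i < length \<mu> \<and> c \<le> \<mu> ! i}" by simp
  also have "\<dots> = length (filter (\<lambda>x. c \<le> x) \<mu>)" by (rule length_filter_conv_card[symmetric])
  also have "\<dots> = length (filter (\<lambda>x. c \<le> x) ds)"
  proof -
    have "mset (filter (\<lambda>x. c \<le> x) \<mu>) = mset (filter (\<lambda>x. c \<le> x) ds)" unfolding \<mu>_def by (simp add: mset_filter)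
    from arg_cong[OF this, of size] show ?thesis by (simp only: size_mset)
  qed
  also have "\<dots> = card {j. j < n \<and> c \<le> ds ! j}" using ld by (simp add: length_filter_conv_card)
  finally have kc: "k \<le> card {j. j < n \<and> c \<le> ds ! j}" .
  obtain J where JS: "J \<subseteq> {j. j < n \<and> c \<le> ds ! j}" and cJ: "card J = k"
    using obtain_subset_with_card_n[OF kc] by metis
  define u where "u j r = vs ! j $ r" for j r
  have vc: "\<And>i. i < n \<Longrightarrow> vs ! i \<in> carrier_vec n" using O l unfolding orthon_def by auto
  have onb: "onb n J u"
  proof
    show "J \<subseteq> {..<n}" using JS by auto
    fix j l assume "j \<in> J" "l \<in> J"
    hence j: "j < n" and l': "l < n" using JS by auto
    have "(\<Sum>r<n. u j r * u l r) = vs ! j \<bullet> vs ! l" unfolding u_def by (rule sprod_sum[OF vc[OF l'], symmetric])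
    thus "(\<Sum>r<n. u j r * u l r) = (if j = l then 1 else 0)" using O l j l' unfolding orthon_def by simp
  qed
  have eig: "(\<Sum>t<n. A $$ (r,t) * u j t) = ds ! j * u j r" if j: "j \<in> J" and r: "r < n" for j r
  proof -
    have jn: "j < n" using j JS by auto
    have "(\<Sum>t<n. A $$ (r,t) * u j t) = (A *\<^sub>v vs ! j) $ r" unfolding u_def by (rule mult_vec_sum[OF Ac vc[OF jn] r, symmetric])
    also have "\<dots> = ds ! j * u j r" using EL l jn vc[OF jn] r unfolding eig_list_def u_def by simp
    finally show ?thesis .
  qed
  have diag0: "\<And>r. r < n \<Longrightarrow> A $$ (r,r) = 0" using Aent G unfolding simple_graph_def by simp
  have ent: "\<And>r t. r < n \<Longrightarrow> t < n \<Longrightarrow> A $$ (r,t) = 0 \<or> A $$ (r,t) = 1" using Aent by simp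
  obtain Q where QP: "Q \<in> proj_set (k - 1) n" and Qb: "2 * real (k - 1) * (c + 1) \<le> (\<Sum>r<n. \<Sum>t<n. \<bar>Q $$ (r,t)\<bar>)"
    using onb.proj_construct[OF onb S eig _ cJ k2 diag0 ent, of c] JS by blast
  have "(\<Sum>r<n. \<Sum>t<n. \<bar>Q $$ (r,t)\<bar>) \<le> real n * lambda_R (k - 1)"
    by (rule lambda_R_lower[OF QP]) (use kn k2 in auto)
  with Qb have "2 * real (k - 1) * (c + 1) \<le> real n * lambda_R (k - 1)" by linarith
  moreover have "real (k - 1) > 0" using k2 by simp
  ultimately have "c + 1 \<le> lambda_R (k - 1) / (2 * real (k - 1)) * real n"
    by (simp add: field_simps)
  thus ?thesis using gc by simp
qed

lemma Mk_finite: "finite {graph_eig k n E | E. simple_graph n E}"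
proof -
  define F where "F S = eigs_desc (mat n n (\<lambda>(i,j). if (i,j) \<in> S then 1 else (0::real))) ! (k - 1)" for S
  have "{graph_eig k n E | E. simple_graph n E} \<subseteq> F ` Pow ({..<n} \<times> {..<n})"
  proof
    fix x assume "x \<in> {graph_eig k n E | E. simple_graph n E}"
    then obtain E where x: "x = graph_eig k n E" by auto
    define S where "S = {(i,j). i < n \<and> j < n \<and> E i j}"
    have "adj_mat n E = mat n n (\<lambda>(i,j). if (i,j) \<in> S then 1 else (0::real))"
      unfolding adj_mat_def S_def by (rule eq_matI) auto
    hence "x = F S" unfolding x graph_eig_def F_def by simp
    moreover have "S \<in> Pow ({..<n} \<times> {..<n})" unfolding S_def by auto
    ultimately show "x \<in> F ` Pow ({..<n} \<times> {..<n})" by blast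
  qed
  moreover have "finite (F ` Pow ({..<n} \<times> {..<n}))" by simp
  ultimately show ?thesis by (rule finite_subset)
qed

lemma Mk_bound:
  assumes k2: "2 \<le> k" and kn: "k \<le> n"
  shows "M_k k n \<le> lambda_R (k - 1) / (2 * real (k - 1)) * real n - 1"
proof -
  have ne: "{graph_eig k n E | E. simple_graph n E} \<noteq> {}"
    using simple_graph_def[of n "\<lambda>_ _. False"] by auto
  have "M_k k n \<in> {graph_eig k n E | E. simple_graph n E}"
    unfolding M_k_def by (rule Max_in[OF Mk_finite ne])
  then obtain E where "simple_graph n E" "M_k k n = graph_eig k n E" by auto
  thus ?thesis using graph_bound[OF k2 kn] by simp
qed

theorem corollary2p2:
  shows "(\<forall>k n E. 2 \<le> k \<longrightarrow> k \<le> n \<longrightarrow> simple_graph n E \<longrightarrow>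
            graph_eig k n E \<le> lambda_R (k - 1) / (2 * real (k - 1)) * real n - 1)
       \<and> (\<forall>k. 2 \<le> k \<longrightarrow> c_k k \<le> lambda_R (k - 1) / (2 * real (k - 1)))"
proof (intro conjI allI impI)
  fix k n E assume "2 \<le> k" "k \<le> n" "simple_graph n E"
  thus "graph_eig k n E \<le> lambda_R (k - 1) / (2 * real (k - 1)) * real n - 1" by (rule graph_bound)
next
  fix k :: nat assume k2: "2 \<le> k"
  show "c_k k \<le> lambda_R (k - 1) / (2 * real (k - 1))"
    unfolding c_k_def
  proof (rule cSUP_least)
    show "{k..} \<noteq> {}" by auto
    fix n assume "n \<in> {k..}"
    hence kn: "k \<le> n" by simp
    hence n0: "real n > 0" using k2 by simp
    have "M_k k n \<le> lambda_R (k - 1) / (2 * real (k - 1)) * real n" using Mk_bound[OF k2 kn] by (rule order_trans) simp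
    thus "M_k k n / real n \<le> lambda_R (k - 1) / (2 * real (k - 1))" using n0 by (simp add: divide_le_eq)
  qed
qed

end
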